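(* Let $N\ge3$, let $A,B$ be real constants, let $a(t)$ be a nonvanishing $C^1$ function on a time interval, and let $f\ge0$ be a $C^1$ function on $\mathbb{R}$. Then \[ \rho(t,\vec x)=\frac{1}{a^2(t)}f\Big(\frac{Ax_1+Bx_2}{a(t)}\Big),\qquad \vec u(t,\vec x)=\frac{\dot a(t)}{a(t)}\big(x_1,\,x_2,\,x_1,\,\dots,\,x_1\big) \] (with $u_i=\frac{\dot a}{a}x_1$ for $3\le i\le N$) satisfy the continuity equation $\rho_t+\nabla\cdot(\rho\vec u)=0$ in $\mathbb{R}^N$. *)

theory Defs
  imports "HOL-Analysis.Analysis"
begin

text \<open>Points of R^N are represented as functions x :: nat \<Rightarrow> real, the coordinates
  being x 1, ..., x N (values at other indices are irrelevant).\<close>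

definition has_partial_deriv ::
  "((nat \<Rightarrow> real) \<Rightarrow> real) \<Rightarrow> nat \<Rightarrow> (nat \<Rightarrow> real) \<Rightarrow> real \<Rightarrow> bool" where
  "has_partial_deriv g i x D \<longleftrightarrow> ((\<lambda>s. g (x(i := s))) has_real_derivative D) (at (x i))"

definition dens :: "(real \<Rightarrow> real) \<Rightarrow> (real \<Rightarrow> real) \<Rightarrow> real \<Rightarrow> real \<Rightarrow> real \<Rightarrow> (nat \<Rightarrow> real) \<Rightarrow> real" where
  "dens f a A B t x = f ((A * x 1 + B * x 2) / a t) / (a t)^2"

definition vel :: "(real \<Rightarrow> real) \<Rightarrow> (real \<Rightarrow> real) \<Rightarrow> nat \<Rightarrow> real \<Rightarrow> (nat \<Rightarrow> real) \<Rightarrow> real" where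
  "vel a a' i t x = a' t / a t * (if i = 2 then x 2 else x 1)"

end

theory Submission
  imports Defs
begin

lemma fchain:
  assumes "\<forall>y. (f has_real_derivative f' y) (at y)"
    and "(g has_real_derivative g') (at t)"
  shows "((\<lambda>s. f (g s)) has_real_derivative f' (g t) * g') (at t)"
  using DERIV_chain2[OF assms(1)[rule_format] assms(2)] by simp

theorem lemma7:
  fixes N :: nat and A B :: real and a a' f f' :: "real \<Rightarrow> real" and I :: "real set"
  assumes N: "N \<ge> 3"
    and I: "is_interval I" "open I"
    and a_nz: "\<forall>t\<in>I. a t \<noteq> 0"
    and a_deriv: "\<forall>t\<in>I. (a has_real_derivative a' t) (at t)"
    and a'_cont: "continuous_on I a'"
    and f_nonneg: "\<forall>y. f y \<ge> 0"
    and f_deriv: "\<forall>y. (f has_real_derivative f' y) (at y)"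
    and f'_cont: "continuous_on UNIV f'"
  shows "\<forall>t\<in>I. \<forall>x :: nat \<Rightarrow> real. \<exists>Dt Dx.
           ((\<lambda>s. dens f a A B s x) has_real_derivative Dt) (at t)
         \<and> (\<forall>i\<in>{1..N}. has_partial_deriv (\<lambda>y. dens f a A B t y * vel a a' i t y) i x (Dx i))
         \<and> Dt + (\<Sum>i=1..N. Dx i) = 0"
proof (intro ballI allI)
  fix t and x :: "nat \<Rightarrow> real" assume t: "t \<in> I"
  have at: "a t \<noteq> 0" using a_nz t by auto
  have ad: "(a has_real_derivative a' t) (at t)" using a_deriv t by auto
  define c where "c = A * x 1 + B * x 2"
  define z where "z = c / a t"
  define h where "h = a' t / a t"
  define \<rho> where "\<rho> = f z / (a t)^2"
  have g1: "((\<lambda>s. c / a s) has_real_derivative - c * a' t / (a t)^2) (at t)"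
    using DERIV_divide[OF DERIV_const ad, of c] at by (simp add: power2_eq_square)
  have g2: "((\<lambda>s. (a s)^2) has_real_derivative 2 * a t * a' t) (at t)"
    using DERIV_power[OF ad, of 2] by (simp add: mult_ac)
  have Dt: "((\<lambda>s. dens f a A B s x) has_real_derivative
     ((f' z * (- c * a' t / (a t)^2)) * (a t)^2 - f z * (2 * a t * a' t)) / ((a t)^2 * (a t)^2)) (at t)"
    unfolding dens_def c_def[symmetric]
    using DERIV_divide[OF fchain[OF f_deriv g1] g2] at by (simp add: z_def)
  define Dx :: "nat \<Rightarrow> real" where "Dx i = (if i = 1 then h * (\<rho> + x 1 * A * f' z / (a t)^3)
      else if i = 2 then h * (\<rho> + x 2 * B * f' z / (a t)^3) else 0)" for i
  have P: "has_partial_deriv (\<lambda>y. dens f a A B t y * vel a a' i t y) i x (Dx i)"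
    if "i \<in> {1..N}" for i
  proof -
    consider "i = 1" | "i = 2" | "i \<noteq> 1" "i \<noteq> 2" by blast
    then show ?thesis
    proof cases
      case 1
      have l: "((\<lambda>s. (A * s + B * x 2) / a t) has_real_derivative A / a t) (at (x 1))"
        using at by (auto intro!: derivative_eq_intros)
      have D: "((\<lambda>s. f ((A * s + B * x 2) / a t) / (a t)^2 * (h * s)) has_real_derivative
          (f' ((A * x 1 + B * x 2) / a t) * (A / a t)) / (a t)^2 * (h * x 1) + f ((A * x 1 + B * x 2) / a t) / (a t)^2 * (h * 1)) (at (x 1))"
        using DERIV_mult[OF DERIV_cdivide[OF fchain[OF f_deriv l], of "(a t)^2"] DERIV_cmult[OF DERIV_ident, of h]] by (simp add: mult_ac)
      have E: "(\<lambda>s. f ((A * s + B * x 2) / a t) / (a t)^2 * (h * s)) = (\<lambda>s. dens f a A B t (x(1 := s)) * vel a a' 1 t (x(1 := s)))"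
        using 1 by (auto simp: dens_def vel_def h_def)
      have "(f' ((A * x 1 + B * x 2) / a t) * (A / a t)) / (a t)^2 * (h * x 1) + f ((A * x 1 + B * x 2) / a t) / (a t)^2 * (h * 1) = Dx 1"
        using at by (simp add: Dx_def h_def \<rho>_def z_def c_def field_simps power3_eq_cube power2_eq_square)
      then show ?thesis using D E 1 unfolding has_partial_deriv_def by simp
    next
      case 2
      have l: "((\<lambda>s. (A * x 1 + B * s) / a t) has_real_derivative B / a t) (at (x 2))"
        using at by (auto intro!: derivative_eq_intros)
      have D: "((\<lambda>s. f ((A * x 1 + B * s) / a t) / (a t)^2 * (h * s)) has_real_derivative
          (f' ((A * x 1 + B * x 2) / a t) * (B / a t)) / (a t)^2 * (h * x 2) + f ((A * x 1 + B * x 2) / a t) / (a t)^2 * (h * 1)) (at (x 2))"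
        using DERIV_mult[OF DERIV_cdivide[OF fchain[OF f_deriv l], of "(a t)^2"] DERIV_cmult[OF DERIV_ident, of h]] by (simp add: mult_ac)
      have E: "(\<lambda>s. f ((A * x 1 + B * s) / a t) / (a t)^2 * (h * s)) = (\<lambda>s. dens f a A B t (x(2 := s)) * vel a a' 2 t (x(2 := s)))"
        using 2 by (auto simp: dens_def vel_def h_def)
      have "(f' ((A * x 1 + B * x 2) / a t) * (B / a t)) / (a t)^2 * (h * x 2) + f ((A * x 1 + B * x 2) / a t) / (a t)^2 * (h * 1) = Dx 2"
        using at by (simp add: Dx_def h_def \<rho>_def z_def c_def field_simps power3_eq_cube power2_eq_square)
      then show ?thesis using D E 2 unfolding has_partial_deriv_def by simp
    next
      case 3
      then show ?thesis unfolding has_partial_deriv_def dens_def vel_def Dx_def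
        by simp
    qed
  qed
  have S: "(\<Sum>i=1..N. Dx i) = Dx 1 + Dx 2"
  proof -
    have "(\<Sum>i=1..N. Dx i) = (\<Sum>i\<in>{1,2}. Dx i)"
      by (rule sum.mono_neutral_right) (use N in \<open>auto simp: Dx_def\<close>)
    then show ?thesis by simp
  qed
  show "\<exists>Dt Dx.
           ((\<lambda>s. dens f a A B s x) has_real_derivative Dt) (at t)
         \<and> (\<forall>i\<in>{1..N}. has_partial_deriv (\<lambda>y. dens f a A B t y * vel a a' i t y) i x (Dx i))
         \<and> Dt + (\<Sum>i=1..N. Dx i) = 0"
  proof (rule exI, rule exI[of _ Dx], intro conjI ballI)
    show "((\<lambda>s. dens f a A B s x) has_real_derivative
     ((f' z * (- c * a' t / (a t)^2)) * (a t)^2 - f z * (2 * a t * a' t)) / ((a t)^2 * (a t)^2)) (at t)"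
      by (rule Dt)
  next
    fix i assume "i \<in> {1..N}" then show "has_partial_deriv (\<lambda>y. dens f a A B t y * vel a a' i t y) i x (Dx i)"
      by (rule P)
  next
    have "Dx 1 + Dx 2 = h * (2 * \<rho> + c * f' z / (a t)^3)"
      by (simp add: Dx_def c_def algebra_simps add_divide_distrib)
    then show "((f' z * (- c * a' t / (a t)^2)) * (a t)^2 - f z * (2 * a t * a' t)) / ((a t)^2 * (a t)^2) + (\<Sum>i=1..N. Dx i) = 0"
      unfolding S using at
      by (simp add: h_def \<rho>_def z_def field_simps power3_eq_cube power2_eq_square)
  qed
qed

end
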